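(* Let $G$ be a locally compact abelian group (written additively) not reduced to its neutral element $0$, $E$ an $\mathbb{R}$-group, and $\mathcal{H}=(H_\varepsilon)_{\varepsilon\in E}$ a continuous absorptive action of $E$ on $G$ compatible with the group operation, i.e. $H_\varepsilon(x+y)=H_\varepsilon(x)+H_\varepsilon(y)$ for all $x,y\in G$, $\varepsilon\in E$. Then: (i) the center of $\mathcal{H}$ is $0$; (ii) $G$ is metrizable; (iii) $G$ is $\sigma$-compact, noncompact and nondiscrete; (iv) any Haar measure $\lambda$ on $G$ is nontrivial and $\mathcal{H}$-homogeneous.
   Context: An $\mathbb{R}$-group is an abelian group $E$ (operation written multiplicatively) whose underlying set is a subset of $\mathbb{R}$ containing all positive integers, such that: (RG1) with the natural order of $\mathbb{R}$, $E$ is a totally ordered group; (RG2) with the topology induced from $\mathbb{R}$, $E$ is a locally compact group; (RG3) there is a nonconstant continuous homomorphism $h:E\to\mathbb{R}_+^*$ such that for every $\alpha\in E$ the set $\{\varepsilon\in E:\varepsilon\ge\alpha\}$ is integrable for $h\cdot m$, $m$ a Haar measure on $E$. $e$ is the identity of $E$, $\varepsilon^{-1}$ the group inverse; inequalities refer to the order of $\mathbb{R}$. An action of $E$ on $X$ is a family $(H_\varepsilon)_{\varepsilon\in E}$ of bijections of $X$ with $H_\varepsilon\circ H_{\varepsilon'}=H_{\varepsilon\varepsilon'}$, $H_e=\mathrm{id}_X$; continuous if $(\varepsilon,x)\mapsto H_\varepsilon(x)$ is continuous on $E\times X$; absorptive if some $\omega\in X$ satisfies: for every neighbourhood $V$ of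 $\omega$ and every $x\in X$ there are a neighbourhood $U$ of $x$ and $\alpha\in E$ with $H_{\varepsilon^{-1}}(U)\subset V$ for all $\varepsilon\le\alpha$; this $\omega$ is unique and called the center. A positive Radon measure $\lambda$ is $\mathcal{H}$-homogeneous if for each $\varepsilon$ there is $c(\varepsilon)>0$ with $\int\varphi(H_\varepsilon(x))d\lambda(x)=c(\varepsilon)\int\varphi\,d\lambda$ for all compactly supported continuous $\varphi$; it is nontrivial if $\lambda\ne0$ and $\lambda\ne\delta_\omega$ ($\omega$ the center). *)

theory Defs
  imports "HOL-Analysis.Analysis" "HOL-Probability.Probability"
begin

definition radon_on :: "'a::topological_space set \<Rightarrow> 'a measure \<Rightarrow> bool" where
  "radon_on S M \<longleftrightarrow>
     space M = S \<and> sets M = sets (restrict_space borel S) \<and>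
     (\<forall>K. compact K \<and> K \<subseteq> S \<longrightarrow> emeasure M K < \<infinity>) \<and>
     (\<forall>A\<in>sets M. emeasure M A =
        (INF U\<in>{U. openin (top_of_set S) U \<and> A \<subseteq> U}. emeasure M U)) \<and>
     (\<forall>U. openin (top_of_set S) U \<longrightarrow>
        emeasure M U = (SUP K\<in>{K. compact K \<and> K \<subseteq> U}. emeasure M K))"

definition haar_on :: "'a::topological_space set \<Rightarrow> ('a \<Rightarrow> 'a \<Rightarrow> 'a) \<Rightarrow> 'a measure \<Rightarrow> bool" where
  "haar_on S f M \<longleftrightarrow>
     radon_on S M \<and> (\<exists>A\<in>sets M. emeasure M A \<noteq> 0) \<and>
     (\<forall>g\<in>S. \<forall>A\<in>sets M. emeasure M (f g ` A) = emeasure M A)"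

definition R_group :: "real set \<Rightarrow> (real \<Rightarrow> real \<Rightarrow> real) \<Rightarrow> real \<Rightarrow> (real \<Rightarrow> real) \<Rightarrow> bool" where
  "R_group E emul eone einv \<longleftrightarrow>
     (\<forall>n::nat. n \<ge> 1 \<longrightarrow> real n \<in> E) \<and>
     (\<forall>x\<in>E. \<forall>y\<in>E. emul x y \<in> E) \<and>
     (\<forall>x\<in>E. \<forall>y\<in>E. \<forall>z\<in>E. emul (emul x y) z = emul x (emul y z)) \<and>
     (\<forall>x\<in>E. \<forall>y\<in>E. emul x y = emul y x) \<and>
     eone \<in> E \<and> (\<forall>x\<in>E. emul eone x = x) \<and>
     (\<forall>x\<in>E. einv x \<in> E \<and> emul (einv x) x = eone) \<and>
     \<comment> \<open>(RG1) totally ordered group for the order of \<real>\<close>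
     (\<forall>x\<in>E. \<forall>y\<in>E. \<forall>z\<in>E. x \<le> y \<longrightarrow> emul z x \<le> emul z y) \<and>
     \<comment> \<open>(RG2) locally compact (topological) group for the induced topology\<close>
     continuous_on (E \<times> E) (\<lambda>(x, y). emul x y) \<and> continuous_on E einv \<and>
     locally_compact_space (top_of_set E) \<and>
     \<comment> \<open>(RG3)\<close>
     (\<exists>h::real \<Rightarrow> real. continuous_on E h \<and> (\<forall>x\<in>E. h x > 0) \<and>
        (\<forall>x\<in>E. \<forall>y\<in>E. h (emul x y) = h x * h y) \<and>
        (\<exists>x\<in>E. \<exists>y\<in>E. h x \<noteq> h y) \<and>
        (\<exists>m. haar_on E emul m \<and>
           (\<forall>\<alpha>\<in>E. set_integrable m {\<epsilon>\<in>E. \<epsilon> \<ge> \<alpha>} h)))"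

definition group_action :: "real set \<Rightarrow> (real \<Rightarrow> real \<Rightarrow> real) \<Rightarrow> real \<Rightarrow>
    (real \<Rightarrow> 'g \<Rightarrow> 'g) \<Rightarrow> bool" where
  "group_action E emul eone H \<longleftrightarrow>
     (\<forall>\<epsilon>\<in>E. bij (H \<epsilon>)) \<and>
     (\<forall>\<epsilon>\<in>E. \<forall>\<epsilon>'\<in>E. H \<epsilon> \<circ> H \<epsilon>' = H (emul \<epsilon> \<epsilon>')) \<and>
     H eone = id"

definition continuous_action :: "real set \<Rightarrow> (real \<Rightarrow> 'g::topological_space \<Rightarrow> 'g) \<Rightarrow> bool" where
  "continuous_action E H \<longleftrightarrow> continuous_on (E \<times> UNIV) (\<lambda>(\<epsilon>, x). H \<epsilon> x)"

text \<open>omega is an absorbing point (a center) of the action; neighbourhoods may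
  equivalently be taken open.\<close>
definition absorbing_point :: "real set \<Rightarrow> (real \<Rightarrow> real) \<Rightarrow>
    (real \<Rightarrow> 'g::topological_space \<Rightarrow> 'g) \<Rightarrow> 'g \<Rightarrow> bool" where
  "absorbing_point E einv H \<omega> \<longleftrightarrow>
     (\<forall>V. open V \<and> \<omega> \<in> V \<longrightarrow>
        (\<forall>x. \<exists>U \<alpha>. open U \<and> x \<in> U \<and> \<alpha> \<in> E \<and>
              (\<forall>\<epsilon>\<in>E. \<epsilon> \<le> \<alpha> \<longrightarrow> H (einv \<epsilon>) ` U \<subseteq> V)))"

definition absorptive :: "real set \<Rightarrow> (real \<Rightarrow> real) \<Rightarrow> (real \<Rightarrow> 'g::topological_space \<Rightarrow> 'g) \<Rightarrow> bool" where
  "absorptive E einv H \<longleftrightarrow> (\<exists>\<omega>. absorbing_point E einv H \<omega>)"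

definition action_center :: "real set \<Rightarrow> (real \<Rightarrow> real) \<Rightarrow> (real \<Rightarrow> 'g::topological_space \<Rightarrow> 'g) \<Rightarrow> 'g" where
  "action_center E einv H = (THE \<omega>. absorbing_point E einv H \<omega>)"

definition homogeneous_measure :: "real set \<Rightarrow> (real \<Rightarrow> 'g::topological_space \<Rightarrow> 'g) \<Rightarrow> 'g measure \<Rightarrow> bool" where
  "homogeneous_measure E H lam \<longleftrightarrow>
     (\<forall>\<epsilon>\<in>E. \<exists>c::real. c > 0 \<and>
        (\<forall>\<phi>::'g \<Rightarrow> real. continuous_on UNIV \<phi> \<and> compact (closure {x. \<phi> x \<noteq> 0}) \<longrightarrow>
           (\<integral>x. \<phi> (H \<epsilon> x) \<partial>lam) = c * (\<integral>x. \<phi> x \<partial>lam)))"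

definition nontrivial_measure :: "real set \<Rightarrow> (real \<Rightarrow> real) \<Rightarrow> (real \<Rightarrow> 'g::topological_space \<Rightarrow> 'g) \<Rightarrow>
    'g measure \<Rightarrow> bool" where
  "nontrivial_measure E einv H lam \<longleftrightarrow>
     (\<exists>A\<in>sets lam. emeasure lam A \<noteq> 0) \<and>
     (\<exists>A\<in>sets lam. emeasure lam A \<noteq> indicator A (action_center E einv H))"

definition sigma_compact :: "'a::topological_space set \<Rightarrow> bool" where
  "sigma_compact S \<longleftrightarrow> (\<exists>K::nat \<Rightarrow> 'a set. (\<forall>n. compact (K n)) \<and> (\<Union>n. K n) = S)"

end

theory Submission
  imports Defs
begin


locale PS =
  fixes E :: "real set" and emul :: "real \<Rightarrow> real \<Rightarrow> real" and eone :: real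
    and einv :: "real \<Rightarrow> real"
    and H :: "real \<Rightarrow> 'g::{topological_ab_group_add, t2_space} \<Rightarrow> 'g"
  assumes G_lc: "locally_compact_space (euclidean :: 'g topology)"
    and G_nontriv: "\<exists>x::'g. x \<noteq> 0"
    and E: "R_group E emul eone einv"
    and act: "group_action E emul eone H"
    and cont: "continuous_action E H"
    and absorb: "absorptive E einv H"
    and additive: "\<forall>\<epsilon>\<in>E. \<forall>x y. H \<epsilon> (x + y) = H \<epsilon> x + H \<epsilon> y"
begin

lemma nat_in_E: "n \<ge> 1 \<Longrightarrow> real n \<in> E" using E unfolding R_group_def by blast
lemma emul_E: "x \<in> E \<Longrightarrow> y \<in> E \<Longrightarrow> emul x y \<in> E" using E unfolding R_group_def by blast
lemma assoc: "x \<in> E \<Longrightarrow> y \<in> E \<Longrightarrow> z \<in> E \<Longrightarrow> emul (emul x y) z = emul x (emul y z)"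
  using E unfolding R_group_def by blast
lemma comm: "x \<in> E \<Longrightarrow> y \<in> E \<Longrightarrow> emul x y = emul y x" using E unfolding R_group_def by blast
lemma eone_E: "eone \<in> E" using E unfolding R_group_def by blast
lemma lunit: "x \<in> E \<Longrightarrow> emul eone x = x" using E unfolding R_group_def by blast
lemma einv_E: "x \<in> E \<Longrightarrow> einv x \<in> E" using E unfolding R_group_def by blast
lemma linv: "x \<in> E \<Longrightarrow> emul (einv x) x = eone" using E unfolding R_group_def by blast
lemma mono: "x \<in> E \<Longrightarrow> y \<in> E \<Longrightarrow> z \<in> E \<Longrightarrow> x \<le> y \<Longrightarrow> emul z x \<le> emul z y"
  using E unfolding R_group_def by blast

lemma rinv: "x \<in> E \<Longrightarrow> emul x (einv x) = eone" by (metis comm einv_E linv)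
lemma runit: "x \<in> E \<Longrightarrow> emul x eone = x" by (metis comm eone_E lunit)

lemma einv_einv: assumes "x \<in> E" shows "einv (einv x) = x"
proof -
  have "einv (einv x) = emul (einv (einv x)) (emul (einv x) x)"
    using assms by (simp add: linv runit einv_E)
  also have "\<dots> = emul (emul (einv (einv x)) (einv x)) x"
    using assms by (simp add: assoc einv_E)
  also have "\<dots> = x" using assms by (simp add: linv lunit einv_E)
  finally show ?thesis .
qed

lemma einv_anti: assumes "x \<in> E" "y \<in> E" "x \<le> y" shows "einv y \<le> einv x"
proof -
  define z where "z = emul (einv x) (einv y)"
  have zE: "z \<in> E" using assms by (simp add: z_def emul_E einv_E)
  have 1: "emul z x = einv y"
    using assms unfolding z_def
    by (metis assoc comm einv_E linv runit)
  have 2: "emul z y = einv x"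
    using assms unfolding z_def
    by (metis assoc einv_E linv runit)
  show ?thesis using mono[OF assms(1,2) zE assms(3)] 1 2 by simp
qed

lemma small_nat: assumes "\<alpha> \<in> E" shows "\<exists>N::nat. N \<ge> 1 \<and> (\<forall>n. n \<ge> N \<longrightarrow> einv (real n) \<le> \<alpha>)"
proof -
  obtain N :: nat where N: "real N \<ge> einv \<alpha>" "N \<ge> 1"
    by (metis max.cobounded1 max.cobounded2 order_trans real_arch_simple of_nat_le_iff le_max_iff_disj nat_le_real_less)
  show ?thesis
  proof (intro exI conjI allI impI)
    fix n :: nat assume "n \<ge> N"
    then have "einv \<alpha> \<le> real n" using N by linarith
    moreover have "n \<ge> 1" using N \<open>n \<ge> N\<close> by simp
    ultimately have "einv (real n) \<le> einv (einv \<alpha>)"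
      using einv_anti[of "einv \<alpha>" "real n"] assms by (simp add: einv_E nat_in_E)
    then show "einv (real n) \<le> \<alpha>" using assms by (simp add: einv_einv)
  qed (use N in auto)
qed

lemma H_comp: "\<epsilon> \<in> E \<Longrightarrow> \<epsilon>' \<in> E \<Longrightarrow> H \<epsilon> (H \<epsilon>' x) = H (emul \<epsilon> \<epsilon>') x"
  using act unfolding group_action_def by (metis comp_apply)
lemma H_one: "H eone x = x" using act unfolding group_action_def by simp
lemma H_inv1: "\<epsilon> \<in> E \<Longrightarrow> H \<epsilon> (H (einv \<epsilon>) x) = x"
  by (simp add: H_comp einv_E rinv H_one)
lemma H_inv2: "\<epsilon> \<in> E \<Longrightarrow> H (einv \<epsilon>) (H \<epsilon> x) = x"
  by (simp add: H_comp einv_E linv H_one)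
lemma H_add: "\<epsilon> \<in> E \<Longrightarrow> H \<epsilon> (x + y) = H \<epsilon> x + H \<epsilon> y" using additive by blast
lemma H_0: "\<epsilon> \<in> E \<Longrightarrow> H \<epsilon> 0 = 0"
  using H_add[of \<epsilon> 0 0] by simp
lemma H_minus: "\<epsilon> \<in> E \<Longrightarrow> H \<epsilon> (- x) = - H \<epsilon> x"
  using H_add[of \<epsilon> x "-x"] H_0 by (simp add: add_eq_0_iff2)
lemma H_diff: "\<epsilon> \<in> E \<Longrightarrow> H \<epsilon> (x - y) = H \<epsilon> x - H \<epsilon> y"
  by (metis H_add H_minus diff_conv_add_uminus)
lemma H_inj: "\<epsilon> \<in> E \<Longrightarrow> H \<epsilon> x = H \<epsilon> y \<Longrightarrow> x = y"
  by (metis H_inv2)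

lemma H_cont: assumes "\<epsilon> \<in> E" shows "continuous_on UNIV (H \<epsilon>)"
proof -
  have "continuous_on UNIV ((\<lambda>(\<epsilon>, x). H \<epsilon> x) \<circ> (\<lambda>x. (\<epsilon>, x)))"
    apply (rule continuous_on_compose)
     apply (intro continuous_intros)
    using continuous_on_subset[of "E \<times> UNIV" "(\<lambda>(\<epsilon>, x). H \<epsilon> x)" "range (Pair \<epsilon>)"] cont assms
    unfolding continuous_action_def by auto
  then show ?thesis by (simp add: o_def)
qed

lemma H_open: assumes "\<epsilon> \<in> E" "open S" shows "open (H \<epsilon> ` S)"
proof -
  have "H \<epsilon> ` S = H (einv \<epsilon>) -` S"
    using assms(1) by (auto simp: image_iff H_inv1 H_inv2 intro!: exI) (metis H_inv1)
  then show ?thesis using H_cont[OF einv_E[OF assms(1)]] assms(2)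
    by (simp add: continuous_on_open_vimage)
qed

lemma H_compact: "\<epsilon> \<in> E \<Longrightarrow> compact S \<Longrightarrow> compact (H \<epsilon> ` S)"
  using H_cont compact_continuous_image continuous_on_subset by blast

lemma absorbing_0: assumes "absorbing_point E einv H \<omega>" shows "\<omega> = 0"
proof (rule ccontr)
  assume "\<omega> \<noteq> 0"
  then obtain V where V: "open V" "\<omega> \<in> V" "0 \<notin> V" using t1_space[OF \<open>\<omega> \<noteq> 0\<close>] by blast
  have "\<forall>x. \<exists>U \<alpha>. open U \<and> x \<in> U \<and> \<alpha> \<in> E \<and> (\<forall>\<epsilon>\<in>E. \<epsilon> \<le> \<alpha> \<longrightarrow> H (einv \<epsilon>) ` U \<subseteq> V)"
    using assms V(1,2) unfolding absorbing_point_def by simp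
  then obtain U \<alpha> where "0 \<in> U" "\<alpha> \<in> E" "\<forall>\<epsilon>\<in>E. \<epsilon> \<le> \<alpha> \<longrightarrow> H (einv \<epsilon>) ` U \<subseteq> V"
    by (metis (no_types))
  then have "H (einv \<alpha>) 0 \<in> V" by blast
  then show False using V H_0 einv_E \<open>\<alpha> \<in> E\<close> by simp
qed

lemma abs0: "absorbing_point E einv H 0"
  using absorb absorbing_0 unfolding absorptive_def by blast

lemma center: "action_center E einv H = 0"
  unfolding action_center_def using abs0 absorbing_0 by (rule the_equality)

lemma contract:
  assumes C: "compact C" and V: "open V" "0 \<in> V"
  shows "\<exists>N::nat. N \<ge> 1 \<and> (\<forall>n\<ge>N. H (real n) ` C \<subseteq> V)"
proof -
  have "\<forall>x. \<exists>U \<alpha>. open U \<and> x \<in> U \<and> \<alpha> \<in> E \<and> (\<forall>\<epsilon>\<in>E. \<epsilon> \<le> \<alpha> \<longrightarrow> H (einv \<epsilon>) ` U \<subseteq> V)"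
    using abs0 V unfolding absorbing_point_def by blast
  then obtain U \<alpha> where U0: "\<forall>x. open (U x) \<and> x \<in> U x \<and> \<alpha> x \<in> E \<and> 
     (\<forall>\<epsilon>\<in>E. \<epsilon> \<le> \<alpha> x \<longrightarrow> H (einv \<epsilon>) ` U x \<subseteq> V)"
    by metis
  then have U: "\<And>x. open (U x)" "\<And>x. x \<in> U x" "\<And>x. \<alpha> x \<in> E"
    "\<And>x \<epsilon>. \<epsilon> \<in> E \<Longrightarrow> \<epsilon> \<le> \<alpha> x \<Longrightarrow> H (einv \<epsilon>) ` U x \<subseteq> V"
    by auto
  obtain F where F: "F \<subseteq> C" "finite F" "C \<subseteq> (\<Union>c\<in>F. U c)"
    using compactE_image[OF C, of C U] U(1,2) by blast
  have "\<forall>x. \<exists>N::nat. N \<ge> 1 \<and> (\<forall>n. n \<ge> N \<longrightarrow> einv (real n) \<le> \<alpha> x)"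
    using small_nat[OF U(3)] by blast
  then obtain M where M0: "\<forall>x. M x \<ge> (1::nat) \<and> (\<forall>n. n \<ge> M x \<longrightarrow> einv (real n) \<le> \<alpha> x)"
    by (rule choice[THEN exE])
  then have M: "\<And>x. M x \<ge> (1::nat)" "\<And>x n. n \<ge> M x \<Longrightarrow> einv (real n) \<le> \<alpha> x"
    by auto
  define N where "N = Max (insert 1 (M ` F))"
  have N1: "N \<ge> 1" unfolding N_def using F by simp
  show ?thesis
  proof (rule exI[of _ N], intro conjI allI impI)
    show "N \<ge> 1" by (rule N1)
    fix n assume "N \<le> n"
    show "H (real n) ` C \<subseteq> V"
    proof
      fix y assume "y \<in> H (real n) ` C"
      then obtain x where x: "x \<in> C" "y = H (real n) x" by blast
      then obtain c where c: "c \<in> F" "x \<in> U c" using F by blast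
      have "M c \<le> N" unfolding N_def using F c by (intro Max_ge) auto
      then have n1: "n \<ge> 1" "n \<ge> M c" using \<open>N \<le> n\<close> M(1)[of c] by auto
      then have "einv (real n) \<le> \<alpha> c" using M by blast
      moreover have nE: "real n \<in> E" using nat_in_E n1 by blast
      ultimately have "H (einv (einv (real n))) ` U c \<subseteq> V"
        using U(4)[of "einv (real n)" c] einv_E[OF nE] by blast
      then have "H (real n) ` U c \<subseteq> V" using einv_einv[OF nE] by simp
      then show "y \<in> V" using x c by blast
    qed
  qed
qed

end


lemma open_transl:
  fixes S :: "'a::topological_ab_group_add set"
  assumes "open S" shows "open ((\<lambda>x. a + x) ` S)"
proof -
  have "(\<lambda>x. a + x) ` S = (\<lambda>y. y - a) -` S"
  proof (rule set_eqI)
    fix y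
    show "y \<in> (\<lambda>x. a + x) ` S \<longleftrightarrow> y \<in> (\<lambda>y. y - a) -` S"
    proof
      assume "y \<in> (\<lambda>x. a + x) ` S"
      then obtain x where "x \<in> S" "y = a + x" by blast
      then show "y \<in> (\<lambda>y. y - a) -` S" by simp
    next
      assume "y \<in> (\<lambda>y. y - a) -` S"
      then have "y - a \<in> S" by simp
      moreover have "y = a + (y - a)" by simp
      ultimately show "y \<in> (\<lambda>x. a + x) ` S" by blast
    qed
  qed
  moreover have "continuous_on UNIV (\<lambda>y::'a. y - a)" by (intro continuous_intros)
  ultimately show ?thesis using assms by (simp add: continuous_on_open_vimage)
qed

lemma Hausdorff_eucl: "Hausdorff_space (euclidean :: 'a::t2_space topology)"
  unfolding Hausdorff_space_def disjnt_def using hausdorff by auto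

definition Wz :: "'g::{topological_ab_group_add, t2_space} set" where
  "Wz = (SOME W. \<exists>Kz::'g set. open W \<and> compact Kz \<and> (0::'g) \<in> W \<and> W \<subseteq> Kz)"
definition Kz :: "'g::{topological_ab_group_add, t2_space} set" where
  "Kz = (SOME Kz. open (Wz::'g set) \<and> compact Kz \<and> (0::'g) \<in> Wz \<and> Wz \<subseteq> Kz)"
definition psi :: "'g::{topological_ab_group_add, t2_space} \<Rightarrow> real" where
  "psi = (SOME f. continuous_map euclidean (top_of_set {0..1}) f \<and> f (0::'g) = 0 \<and> f ` (- Wz) \<subseteq> {1})"
definition Psi :: "'g::{topological_ab_group_add, t2_space} set" where
  "Psi = {z. psi z < 1}"

context PS begin

abbreviation "WW \<equiv> (Wz::'g set)"
abbreviation "KK \<equiv> (Kz::'g set)"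
abbreviation "ps \<equiv> (psi::'g \<Rightarrow> real)"
abbreviation "PP \<equiv> (Psi::'g set)"


lemma loc_nbhd: obtains W K where "open W" "compact K" "(0::'g) \<in> W" "W \<subseteq> K"
proof -
  have "\<forall>x::'g. \<exists>U. open U \<and> (\<exists>K. compact K \<and> x \<in> U \<and> U \<subseteq> K)"
    using G_lc unfolding locally_compact_space_def by simp
  then have "\<exists>U. open U \<and> (\<exists>K. compact K \<and> (0::'g) \<in> U \<and> U \<subseteq> K)" by blast
  then show ?thesis using that by blast
qed

lemma WzKz: "open WW" "compact KK" "0 \<in> WW" "WW \<subseteq> KK"
proof -
  have ex: "\<exists>W. \<exists>K::'g set. open W \<and> compact K \<and> 0 \<in> W \<and> W \<subseteq> K" using loc_nbhd by metis
  have ex2: "\<exists>K::'g set. open WW \<and> compact K \<and> 0 \<in> WW \<and> WW \<subseteq> K"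
    using someI_ex[OF ex] unfolding Wz_def .
  have "open WW \<and> compact KK \<and> 0 \<in> WW \<and> WW \<subseteq> KK"
    using someI_ex[OF ex2] unfolding Kz_def .
  then show "open WW" "compact KK" "0 \<in> WW" "WW \<subseteq> KK" by auto
qed

definition "piece m = H (einv (real (Suc m))) ` KK"

lemma piece_compact: "compact (piece m)"
proof -
  have "real (Suc m) \<in> E" by (rule nat_in_E) simp
  then show ?thesis unfolding piece_def by (intro H_compact einv_E WzKz(2))
qed

lemma pieces_cover: "(\<Union>m. piece m) = UNIV"
proof -
  have "x \<in> (\<Union>m. piece m)" for x :: 'g
  proof -
    obtain N where N: "N \<ge> 1" "\<forall>n\<ge>N. H (real n) ` {x} \<subseteq> WW"
      using contract[of "{x}" WW] WzKz by auto
    then have "H (real N) x \<in> KK" using WzKz by auto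
    moreover have "x = H (einv (real N)) (H (real N) x)"
      using H_inv2 nat_in_E N(1) by simp
    moreover have "Suc (N - 1) = N" using N(1) by simp
    ultimately have "x \<in> piece (N - 1)" unfolding piece_def by (metis image_eqI)
    then show ?thesis by blast
  qed
  then show ?thesis by auto
qed

lemma sigma_compact_G: "sigma_compact (UNIV :: 'g set)"
  unfolding sigma_compact_def using piece_compact pieces_cover by blast

lemma not_compact_G: "\<not> compact (UNIV :: 'g set)"
proof
  assume c: "compact (UNIV :: 'g set)"
  obtain x :: 'g where "x \<noteq> 0" using G_nontriv by blast
  then obtain V where V: "open V" "0 \<in> V" "x \<notin> V" using t1_space[of 0 x] by blast
  obtain N where N: "N \<ge> 1" "\<forall>n\<ge>N. H (real n) ` UNIV \<subseteq> V"
    using contract[OF c V(1,2)] by blast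
  have "H (real N) (H (einv (real N)) x) = x" using H_inv1 nat_in_E N(1) by simp
  moreover have "H (real N) ` UNIV \<subseteq> V" using N(2) by simp
  ultimately have "x \<in> V" by (metis UNIV_I image_subset_iff)
  then show False using V(3) by simp
qed

lemma not_discrete_G: "\<exists>x::'g. \<not> open {x}"
proof (rule ccontr)
  assume "\<not> (\<exists>x::'g. \<not> open {x})"
  then have o: "open {0::'g}" by blast
  obtain x :: 'g where "x \<noteq> 0" using G_nontriv by blast
  obtain N where N: "N \<ge> 1" "\<forall>n\<ge>N. H (real n) ` {x} \<subseteq> {0}"
    using contract[of "{x}" "{0}"] o by auto
  then have "H (real N) x = H (real N) 0" using H_0 nat_in_E by auto
  then have "x = 0" using H_inj nat_in_E N(1) by blast
  then show False using \<open>x \<noteq> 0\<close> by blast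
qed

lemma compl_regular: "completely_regular_space (euclidean :: 'g topology)"
  apply (rule locally_compact_regular_imp_completely_regular_space)
  apply (rule G_lc)
  apply (rule disjI1)
  by (rule Hausdorff_eucl)


lemma ps: "continuous_map euclidean (top_of_set {0..1}) (ps::'g\<Rightarrow>real)" "ps (0::'g) = 0" "\<And>y::'g. y \<notin> WW \<Longrightarrow> ps y = 1"
proof -
  have "closed (- WW)" using WzKz(1) by (rule closed_Compl)
  then have cl: "closedin euclidean (- WW)" unfolding closed_closedin .
  have "0 \<in> topspace euclidean - (- WW)" using WzKz(3) by (simp only: topspace_euclidean Diff_iff UNIV_I Compl_iff not_not)
  then have pre: "closedin euclidean (- WW) \<and> 0 \<in> topspace euclidean - (- WW)" using cl by blast
  have all: "\<forall>S x. closedin euclidean S \<and> x \<in> topspace euclidean - S \<longrightarrow>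
     (\<exists>f::'g\<Rightarrow>real. continuous_map euclidean (top_of_set {0..1}) f \<and> f x = 0 \<and> f ` S \<subseteq> {1})"
    using compl_regular unfolding completely_regular_space_def .
  have ex: "\<exists>f::'g\<Rightarrow>real. continuous_map euclidean (top_of_set {0..1}) f \<and> f (0::'g) = 0 \<and> f ` (- WW) \<subseteq> {1}"
    by (rule mp[OF spec[OF spec[OF all, of "- WW"], of 0] pre])
  have "continuous_map euclidean (top_of_set {0..1}) ps \<and> ps (0::'g) = 0 \<and> ps ` (- WW) \<subseteq> {1}"
    using someI_ex[OF ex] unfolding psi_def .
  then show "continuous_map euclidean (top_of_set {0..1}) ps" "ps 0 = 0" "\<And>y. y \<notin> WW \<Longrightarrow> ps y = 1"
    by auto
qed

lemma psi_cont: "continuous_on UNIV (ps::'g\<Rightarrow>real)"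
  using ps(1) unfolding continuous_map_in_subtopology by auto

lemma psi_range: "ps (y::'g) \<in> {0..1}"
  using ps(1) by (auto simp: continuous_map_def)


lemma PP: "open (PP::'g set)" "(0::'g) \<in> PP" "(PP::'g set) \<subseteq> WW"
proof -
  show "open (PP::'g set)" unfolding Psi_def
    using open_vimage[OF open_lessThan psi_cont, of 1] by (simp add: vimage_def lessThan_def)
  show "0 \<in> PP" using ps(2) by (simp add: Psi_def)
  show "PP \<subseteq> WW" using ps by (force simp: Psi_def)
qed

definition "Bn n d = (\<lambda>z. d + H (real n) z) ` PP"

lemma Bn_open: "n \<ge> 1 \<Longrightarrow> open (Bn n d)"
proof -
  assume "n \<ge> 1"
  then have "open (H (real n) ` PP)" using H_open nat_in_E PP by blast
  then have "open ((\<lambda>x. d + x) ` (H (real n) ` PP))" by (rule open_transl)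
  then show ?thesis unfolding Bn_def by (simp add: image_image)
qed

lemma Bn_mem: "n \<ge> 1 \<Longrightarrow> y \<in> Bn n d \<longleftrightarrow> H (einv (real n)) (y - d) \<in> PP"
proof
  assume n: "n \<ge> 1"
  { assume "y \<in> Bn n d"
    then obtain z where "z \<in> PP" "y = d + H (real n) z" unfolding Bn_def by blast
    then show "H (einv (real n)) (y - d) \<in> PP" using H_inv2 nat_in_E n by simp }
  { assume "H (einv (real n)) (y - d) \<in> PP"
    moreover have "y = d + H (real n) (H (einv (real n)) (y - d))" using H_inv1 nat_in_E n by simp
    ultimately show "y \<in> Bn n d" unfolding Bn_def by blast }
qed

definition "Fs n m = (SOME F. finite F \<and> F \<subseteq> piece m \<and> piece m \<subseteq> (\<Union>d\<in>F. Bn n d))"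

lemma Fs: assumes "n \<ge> 1" shows "finite (Fs n m)" "Fs n m \<subseteq> piece m" "piece m \<subseteq> (\<Union>d\<in>Fs n m. Bn n d)"
proof -
  have "piece m \<subseteq> (\<Union>d\<in>piece m. Bn n d)"
  proof
    fix x assume "x \<in> piece m"
    moreover have "x \<in> Bn n x" unfolding Bn_def using PP H_0 nat_in_E assms by (force simp: image_iff)
    ultimately show "x \<in> (\<Union>d\<in>piece m. Bn n d)" by blast
  qed
  then obtain F where "F \<subseteq> piece m" "finite F" "piece m \<subseteq> (\<Union>d\<in>F. Bn n d)"
    using compactE_image[OF piece_compact, of "piece m" "Bn n"] Bn_open assms by blast
  then have "\<exists>F. finite F \<and> F \<subseteq> piece m \<and> piece m \<subseteq> (\<Union>d\<in>F. Bn n d)" by blast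
  then have "finite (Fs n m) \<and> Fs n m \<subseteq> piece m \<and> piece m \<subseteq> (\<Union>d\<in>Fs n m. Bn n d)"
    unfolding Fs_def by (rule someI_ex)
  then show "finite (Fs n m)" "Fs n m \<subseteq> piece m" "piece m \<subseteq> (\<Union>d\<in>Fs n m. Bn n d)" by auto
qed

lemma base:
  assumes "open U" "x \<in> U"
  shows "\<exists>n m d. n \<ge> 1 \<and> d \<in> Fs n m \<and> x \<in> Bn n d \<and> Bn n d \<subseteq> U"
proof -
  define C where "C = (\<lambda>p. fst p - snd p) ` ((KK::'g set) \<times> KK)"
  have cC: "compact C" unfolding C_def
    by (intro compact_continuous_image compact_Times WzKz continuous_intros)
  define V where "V = (\<lambda>z. x + z) -` U"
  have oV: "open V" unfolding V_def
  proof -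
    have "continuous_on UNIV (\<lambda>z. x + z)" by (intro continuous_intros)
    then show "open ((\<lambda>z. x + z) -` U)"
      using continuous_on_open_vimage[OF open_UNIV, of "\<lambda>z. x + z"] assms(1) by auto
  qed
  have "0 \<in> V" using assms unfolding V_def by simp
  obtain n where n: "n \<ge> 1" "H (real n) ` C \<subseteq> V"
    using contract[OF cC oV \<open>0 \<in> V\<close>] by blast
  obtain m where m: "x \<in> piece m" using pieces_cover by blast
  then obtain d where d: "d \<in> Fs n m" "x \<in> Bn n d" using Fs[OF n(1), of m] by blast
  have "Bn n d \<subseteq> U"
  proof
    fix y assume "y \<in> Bn n d"
    then obtain z where z: "z \<in> PP" "y = d + H (real n) z" unfolding Bn_def by blast
    obtain p where p: "p \<in> PP" "x = d + H (real n) p" using d unfolding Bn_def by blast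
    have "z - p \<in> C" unfolding C_def using z p PP WzKz by force
    then have "H (real n) (z - p) \<in> V" using n by blast
    moreover have "H (real n) (z - p) = y - x" using z p H_diff nat_in_E n(1) by simp
    ultimately show "y \<in> U" unfolding V_def by simp
  qed
  then show ?thesis using n d by blast
qed

end


lemma metrizable_from_family:
  fixes K :: "('a::t2_space \<Rightarrow> real) set"
  assumes cK: "countable K"
    and contK: "\<And>g. g \<in> K \<Longrightarrow> continuous_map euclidean (top_of_set {0..1}) g"
    and sep: "\<And>x U. open U \<Longrightarrow> x \<in> U \<Longrightarrow> \<exists>g\<in>K. g x < 1 \<and> (\<forall>y. y \<notin> U \<longrightarrow> g y = 1)"
  shows "metrizable_space (euclidean :: 'a topology)"
proof -
  define X where "X = (euclidean :: 'a topology)"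
  define e where "e \<equiv> \<lambda>x. \<lambda>f\<in>K. f x"
  have "e x \<noteq> e y" if xy: "x \<noteq> y" for x y
  proof -
    have "open (- {y})" by (intro open_Compl closed_singleton)
    then obtain g where g: "g \<in> K" "g x < 1" "\<forall>z. z \<notin> - {y} \<longrightarrow> g z = 1"
      using sep[of "- {y}" x] xy by blast
    then have "g y = 1" by simp
    then have "e x g \<noteq> e y g" using g unfolding e_def by simp
    then show ?thesis by metis
  qed
  then have "inj_on e (topspace X)"
    by (meson inj_onI)
  then obtain e' where e': "\<And>x. x \<in> topspace X \<Longrightarrow> e' (e x) = x"
    by (metis inv_into_f_f)
  have "continuous_map (subtopology (product_topology (\<lambda>f. top_of_set {0..1}) K) (e ` topspace X)) X e'"
  proof (clarsimp simp add: continuous_map_atin limitin_atin openin_subtopology_alt e')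
    fix x U
    assume "e x \<in> K \<rightarrow>\<^sub>E {0..1}" and "x \<in> topspace X" and "openin X U" and "x \<in> U"
    then obtain g where g: "g \<in> K" "g x < 1" "\<forall>y. y \<notin> U \<longrightarrow> g y = 1"
      using sep[of U x] unfolding X_def by auto
    have "openin (top_of_set {0..1}) {0..<1::real}"
      using open_real_greaterThanLessThan[of "-1" 1] by (force simp: openin_open)
    moreover have "e x \<in> (\<Pi>\<^sub>E f\<in>K. if f = g then {0..<1} else {0..1})"
      using \<open>e x \<in> K \<rightarrow>\<^sub>E {0..1}\<close> g by (auto simp add: e_def PiE_iff)
    moreover have "e y = e x"
      if "y \<notin> U" and ey: "e y \<in> (\<Pi>\<^sub>E f\<in>K. if f = g then {0..<1} else {0..1})"
           and y: "y \<in> topspace X" for y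
    proof -
      have "e y g \<in> {0..<1}"
        using ey g(1) by (smt (verit, ccfv_SIG) PiE_mem)
      with g \<open>y \<notin> U\<close> show ?thesis
        by (simp add: e_def)
    qed
    ultimately
    show "\<exists>W. openin (product_topology (\<lambda>f. top_of_set {0..1}) K) W \<and> e x \<in> W \<and> e' ` (e ` topspace X \<inter> W - {e x}) \<subseteq> U"
      apply (rule_tac x="PiE K (\<lambda>f. if f = g then {0..<1} else {0..1})" in exI)
      by (auto simp: openin_PiE_gen e')
  qed
  moreover have "continuous_map X (product_topology (\<lambda>f. top_of_set {0..1}) K) e"
    unfolding e_def using contK
    by (auto simp: continuous_map_componentwise X_def)
  ultimately have emb: "embedding_map X (product_topology (\<lambda>f. top_of_set {0..1}) K) e"
    using e' unfolding embedding_map_def homeomorphic_map_maps homeomorphic_maps_def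
    by (fastforce simp: continuous_map_in_subtopology)
  have "metrizable_space (product_topology (\<lambda>f. top_of_set {0..1::real}) K)"
    unfolding metrizable_space_product_topology
    using cK by (auto intro: countable_subset metrizable_space_subtopology metrizable_space_euclidean)
  then have "metrizable_space (subtopology (product_topology (\<lambda>f. top_of_set {0..1::real}) K) (e ` topspace X))"
    by (rule metrizable_space_subtopology)
  then show ?thesis
    using embedding_map_imp_homeomorphic_space[OF emb] homeomorphic_metrizable_space
    unfolding X_def by blast
qed


context PS begin

definition "gfun n d = (\<lambda>y. ps (H (einv (real n)) (y - d)))"
definition "Idx = {(n, m, d). n \<ge> 1 \<and> d \<in> Fs n m}"

lemma Idx_countable: "countable Idx"
proof -
  have "Idx = (\<Union>n\<in>{n. n \<ge> 1}. \<Union>m. (\<lambda>d. (n, m, d)) ` Fs n m)"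
    unfolding Idx_def by auto
  moreover have "countable ((\<lambda>d. (n, m, d)) ` Fs n m)" if "n \<ge> 1" for n m
    using Fs(1)[OF that] by (simp add: countable_finite)
  ultimately show ?thesis by (auto intro!: countable_UN)
qed

lemma gfun_lt: "n \<ge> 1 \<Longrightarrow> gfun n d y < 1 \<longleftrightarrow> y \<in> Bn n d"
  by (simp add: gfun_def Bn_mem Psi_def)

lemma gfun_cont: assumes "n \<ge> 1" shows "continuous_map euclidean (top_of_set {0..1}) (gfun n d)"
proof -
  have nE: "einv (real n) \<in> E" using assms by (simp add: einv_E nat_in_E)
  have "continuous_on UNIV (\<lambda>y. H (einv (real n)) (y - d))"
    by (rule continuous_on_compose2[OF H_cont[OF nE]]) (auto intro!: continuous_intros)
  then have "continuous_on UNIV (gfun n d)"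
    unfolding gfun_def by (rule continuous_on_compose2[OF psi_cont]) auto
  then show ?thesis using psi_range
    by (auto simp: continuous_map_in_subtopology gfun_def)
qed

lemma metrizable_G: "metrizable_space (euclidean :: 'g topology)"
proof (rule metrizable_from_family[where K="(\<lambda>(n, m, d). gfun n d) ` Idx"])
  show "countable ((\<lambda>(n, m, d). gfun n d) ` Idx)" using Idx_countable by simp
  show "continuous_map euclidean (top_of_set {0..1}) g" if "g \<in> (\<lambda>(n, m, d). gfun n d) ` Idx" for g
    using that gfun_cont unfolding Idx_def by auto
  fix x :: 'g and U assume "open U" "x \<in> U"
  then obtain n m d where nmd: "n \<ge> 1" "d \<in> Fs n m" "x \<in> Bn n d" "Bn n d \<subseteq> U"
    using base by blast
  show "\<exists>g\<in>(\<lambda>(n, m, d). gfun n d) ` Idx. g x < 1 \<and> (\<forall>y. y \<notin> U \<longrightarrow> g y = 1)"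
  proof (rule bexI[of _ "gfun n d"])
    show "gfun n d x < 1 \<and> (\<forall>y. y \<notin> U \<longrightarrow> gfun n d y = 1)"
    proof (intro conjI allI impI)
      show "gfun n d x < 1" using gfun_lt nmd by blast
      fix y assume "y \<notin> U"
      then have "\<not> gfun n d y < 1" using gfun_lt nmd by blast
      moreover have "gfun n d y \<le> 1" using psi_range unfolding gfun_def by simp
      ultimately show "gfun n d y = 1" by simp
    qed
    show "gfun n d \<in> (\<lambda>(n, m, d). gfun n d) ` Idx"
      using nmd unfolding Idx_def by force
  qed
qed

definition "Bas = (\<lambda>(n, m, d). Bn n d) ` Idx"

lemma Bas: "countable Bas" "\<And>B. B \<in> Bas \<Longrightarrow> open B"
  "\<And>U (x::'g). open U \<Longrightarrow> x \<in> U \<Longrightarrow> \<exists>B\<in>Bas. x \<in> B \<and> B \<subseteq> U"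
proof -
  show "countable Bas" unfolding Bas_def using Idx_countable by simp
  show "\<And>B. B \<in> Bas \<Longrightarrow> open B" unfolding Bas_def Idx_def using Bn_open by auto
  fix U and x :: 'g assume "open U" "x \<in> U"
  then obtain n m d where nmd: "n \<ge> 1" "d \<in> Fs n m" "x \<in> Bn n d" "Bn n d \<subseteq> U"
    using base by blast
  then show "\<exists>B\<in>Bas. x \<in> B \<and> B \<subseteq> U" unfolding Bas_def Idx_def by force
qed

end


definition inv_meas :: "'a::{topological_ab_group_add, t2_space} measure \<Rightarrow> bool" where
  "inv_meas M \<longleftrightarrow> sets M = sets borel \<and> (\<forall>K. compact K \<longrightarrow> emeasure M K < \<infinity>) \<and>
     (\<forall>a. \<forall>A\<in>sets M. emeasure M ((+) a ` A) = emeasure M A)"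

definition Cc :: "('a::topological_space \<Rightarrow> real) \<Rightarrow> bool" where
  "Cc f \<longleftrightarrow> continuous_on UNIV f \<and> compact (closure {x. f x \<noteq> 0})"

lemma inv_meas_sets: "inv_meas M \<Longrightarrow> sets M = sets borel"
  unfolding inv_meas_def by (rule conjunct1)
lemma inv_meas_fin: "inv_meas M \<Longrightarrow> compact K \<Longrightarrow> emeasure M K < \<infinity>"
  unfolding inv_meas_def by (drule conjunct2, drule conjunct1, erule allE, erule mp)
lemma inv_meas_inv: "inv_meas M \<Longrightarrow> A \<in> sets M \<Longrightarrow> emeasure M ((+) a ` A) = emeasure M A"
  unfolding inv_meas_def by (drule conjunct2, drule conjunct2, erule allE, erule bspec)

lemma compact_sets: "compact (K::'a::t2_space set) \<Longrightarrow> K \<in> sets borel"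
  by (intro borel_closed compact_imp_closed)

lemma inv_meas_space: "inv_meas M \<Longrightarrow> space M = UNIV"
proof -
  assume "inv_meas M"
  then have "sets M = sets borel" by (rule inv_meas_sets)
  then have "space M = space borel" by (rule sets_eq_imp_space_eq)
  then show "space M = UNIV" by simp
qed

lemma inv_meas_cont_meas:
  assumes "inv_meas M" "continuous_on UNIV f"
  shows "f \<in> borel_measurable M"
proof -
  have sM: "sets M = sets borel" using assms(1) by (rule inv_meas_sets)
  show ?thesis unfolding measurable_cong_sets[OF sM refl]
    by (rule borel_measurable_continuous_onI[OF assms(2)])
qed

lemma inv_meas_transl:
  fixes f :: "'a::{topological_ab_group_add, t2_space} \<Rightarrow> real"
  assumes M: "inv_meas M" and f: "f \<in> borel_measurable borel"
  shows "(\<integral>x. f (x + a) \<partial>M) = integral\<^sup>L M f"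
proof -
  have sM: "sets M = sets borel" using M by (rule inv_meas_sets)
  have meas: "(\<lambda>x. x + a) \<in> measurable M borel"
    by (rule inv_meas_cont_meas[OF M]) (intro continuous_intros)
  have "distr M borel (\<lambda>x. x + a) = M"
  proof (rule measure_eqI)
    show "sets (distr M borel (\<lambda>x. x + a)) = sets M" using sM by simp
    fix A assume "A \<in> sets (distr M borel (\<lambda>x. x + a))"
    then have A: "A \<in> sets borel" by simp
    have eq: "(\<lambda>x. x + a) -` A \<inter> space M = (+) (- a) ` A"
    proof (rule set_eqI)
      fix y
      show "y \<in> (\<lambda>x. x + a) -` A \<inter> space M \<longleftrightarrow> y \<in> (+) (- a) ` A"
      proof
        assume "y \<in> (\<lambda>x. x + a) -` A \<inter> space M"
        then have "y + a \<in> A" by simp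
        moreover have "y = - a + (y + a)" by simp
        ultimately show "y \<in> (+) (- a) ` A" by blast
      next
        assume "y \<in> (+) (- a) ` A"
        then obtain z where "z \<in> A" "y = - a + z" by blast
        then show "y \<in> (\<lambda>x. x + a) -` A \<inter> space M" using inv_meas_space[OF M] by simp
      qed
    qed
    have inv: "emeasure M ((+) (- a) ` A) = emeasure M A" using M A sM by (intro inv_meas_inv) auto
    show "emeasure (distr M borel (\<lambda>x. x + a)) A = emeasure M A"
      using emeasure_distr[OF meas A] eq inv by simp
  qed
  then have "integral\<^sup>L M f = integral\<^sup>L (distr M borel (\<lambda>x. x + a)) f" by simp
  also have "\<dots> = (\<integral>x. f (x + a) \<partial>M)" by (rule integral_distr[OF meas f])
  finally show ?thesis by simp
qed

lemma Cc_bound: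
  fixes f :: "'a::t2_space \<Rightarrow> real"
  assumes "Cc f"
  obtains B where "B \<ge> 0" "\<And>x. \<bar>f x\<bar> \<le> B * indicator (closure {x. f x \<noteq> 0}) x"
proof -
  define S where "S = closure {x. f x \<noteq> 0}"
  have "compact (f ` S)" using assms unfolding Cc_def S_def
    by (metis compact_continuous_image continuous_on_subset subset_UNIV)
  then have "bounded (f ` S)" by (rule compact_imp_bounded)
  then obtain B where B: "\<forall>x\<in>S. \<bar>f x\<bar> \<le> B" unfolding bounded_real by auto
  have "\<bar>f x\<bar> \<le> max B 0 * indicator S x" for x
  proof (cases "x \<in> S")
    case True
    then have "\<bar>f x\<bar> \<le> B" using B by blast
    moreover have "indicator S x = (1::real)" using True by simp
    ultimately show ?thesis by simp
  next
    case False
    have "{x. f x \<noteq> 0} \<subseteq> S" unfolding S_def by (rule closure_subset)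
    then have "f x = 0" using False by blast
    then show ?thesis by simp
  qed
  then show ?thesis using that[of "max B 0"] unfolding S_def by auto
qed

lemma Cc_integrable:
  assumes M: "inv_meas M" and f: "Cc f"
  shows "integrable M f"
proof -
  define S where "S = closure {x. f x \<noteq> 0}"
  obtain B where B: "B \<ge> 0" "\<And>x. \<bar>f x\<bar> \<le> B * indicator S x" using Cc_bound[OF f] S_def by metis
  have cS: "compact S" using f unfolding Cc_def S_def by simp
  have SM: "S \<in> sets M" using inv_meas_sets[OF M] compact_sets[OF cS] by simp
  have "emeasure M S < \<infinity>" using inv_meas_fin[OF M cS] .
  then have "integrable M (indicator S :: _ \<Rightarrow> real)" using SM by simp
  then have i1: "integrable M (\<lambda>x. B * indicator S x)" by simp
  have m1: "f \<in> borel_measurable M" using inv_meas_cont_meas[OF M] f unfolding Cc_def by blast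
  have a1: "AE x in M. norm (f x) \<le> norm (B * indicator S x)"
    using B by (auto simp: abs_mult)
  show ?thesis by (rule Bochner_Integration.integrable_bound[OF i1 m1 a1])
qed

locale GM =
  fixes Bas :: "'a::{topological_ab_group_add, t2_space} set set"
    and P :: "nat \<Rightarrow> 'a set"
  assumes Bas_count: "countable Bas" and Bas_open: "\<And>B. B \<in> Bas \<Longrightarrow> open B"
    and Bas_base: "\<And>U x. open U \<Longrightarrow> x \<in> U \<Longrightarrow> \<exists>B\<in>Bas. x \<in> B \<and> B \<subseteq> U"
    and P_comp: "\<And>m. compact (P m)" and P_cover: "(\<Union>m. P m) = UNIV"
begin

lemma sf: fixes M :: "'a measure" assumes M: "inv_meas M" shows "sigma_finite_measure M"
proof -
  have "countable (range P) \<and> range P \<subseteq> sets M \<and> \<Union> (range P) = space M \<and> (\<forall>a\<in>range P. emeasure M a \<noteq> \<infinity>)"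
  proof (intro conjI)
    show "countable (range P)" by simp
    show "range P \<subseteq> sets M" using inv_meas_sets[OF M] P_comp compact_sets by auto
    show "\<Union> (range P) = space M" using P_cover inv_meas_space[OF M] by simp
    show "\<forall>a\<in>range P. emeasure M a \<noteq> \<infinity>" using inv_meas_fin[OF M P_comp] by (auto simp: less_top)
  qed
  then show ?thesis unfolding sigma_finite_measure_def by blast
qed

lemma open_pair_sets:
  assumes "open (Oo :: ('a \<times> 'a) set)"
  shows "Oo \<in> sets (borel \<Otimes>\<^sub>M borel)"
proof -
  define C where "C = (\<lambda>(A, B). A \<times> B) ` {(A, B). A \<in> Bas \<and> B \<in> Bas \<and> A \<times> B \<subseteq> Oo}"
  have "countable C" unfolding C_def
    by (rule countable_image, rule countable_subset[of _ "Bas \<times> Bas"]) (auto simp: Bas_count)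
  moreover have "C \<subseteq> sets (borel \<Otimes>\<^sub>M borel)"
    unfolding C_def using Bas_open by auto
  ultimately have "\<Union>C \<in> sets (borel \<Otimes>\<^sub>M borel)" by (rule sets.countable_Union)
  moreover have "\<Union>C = Oo"
  proof
    show "\<Union>C \<subseteq> Oo" unfolding C_def by auto
    show "Oo \<subseteq> \<Union>C"
    proof
      fix z assume "z \<in> Oo"
      then obtain A B where AB: "open A" "open B" "z \<in> A \<times> B" "A \<times> B \<subseteq> Oo"
        using open_prod_elim[OF assms] by metis
      have "fst z \<in> A" "snd z \<in> B" using AB(3) by (auto simp: mem_Times_iff)
      then obtain A' B' where A': "A' \<in> Bas" "fst z \<in> A'" "A' \<subseteq> A"
        and B': "B' \<in> Bas" "snd z \<in> B'" "B' \<subseteq> B"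
        using Bas_base[OF AB(1)] Bas_base[OF AB(2)] by meson
      have "A' \<times> B' \<in> C" unfolding C_def using A' B' AB(4) by blast
      moreover have "z \<in> A' \<times> B'" using A' B' by (cases z) auto
      ultimately show "z \<in> \<Union>C" by blast
    qed
  qed
  ultimately show ?thesis by simp
qed

lemma pair_cont_meas:
  fixes F :: "'a \<times> 'a \<Rightarrow> real"
  assumes F: "continuous_on UNIV F" and M: "sets M = sets borel" and N: "sets N = sets borel"
  shows "F \<in> borel_measurable (M \<Otimes>\<^sub>M N)"
proof (rule borel_measurableI)
  fix S :: "real set" assume "open S"
  then have "open (F -` S)" using F by (simp add: continuous_on_open_vimage)
  then have "F -` S \<in> sets (borel \<Otimes>\<^sub>M borel)" by (rule open_pair_sets)
  moreover have "sets (M \<Otimes>\<^sub>M N) = sets (borel \<Otimes>\<^sub>M borel)" using M N by (rule sets_pair_measure_cong)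
  moreover have "space (M \<Otimes>\<^sub>M N) = UNIV"
    using M N by (simp add: space_pair_measure sets_eq_imp_space_eq[OF M] sets_eq_imp_space_eq[OF N])
  ultimately show "F -` S \<inter> space (M \<Otimes>\<^sub>M N) \<in> sets (M \<Otimes>\<^sub>M N)" by simp
qed

lemma pair_integrable:
  fixes F :: "'a \<times> 'a \<Rightarrow> real"
  assumes M: "inv_meas M" and N: "inv_meas N" and F: "continuous_on UNIV F"
    and A: "compact A" and B: "compact B" and supp: "\<And>z. z \<notin> A \<times> B \<Longrightarrow> F z = 0"
  shows "integrable (M \<Otimes>\<^sub>M N) F"
proof -
  have "compact (F ` (A \<times> B))"
    using compact_Times[OF A B] F by (metis compact_continuous_image continuous_on_subset subset_UNIV)
  then have "bounded (F ` (A \<times> B))" by (rule compact_imp_bounded)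
  then obtain Bd where Bd: "\<forall>z\<in>A \<times> B. \<bar>F z\<bar> \<le> Bd" unfolding bounded_real by auto
  have bnd: "\<bar>F z\<bar> \<le> max Bd 0 * indicator (A \<times> B) z" for z
  proof (cases "z \<in> A \<times> B")
    case True
    then have "\<bar>F z\<bar> \<le> Bd" using Bd by blast
    then show ?thesis using True by simp
  next
    case False
    then show ?thesis using supp[of z] by simp
  qed
  have sM: "sets M = sets borel" and sN: "sets N = sets borel" using inv_meas_sets[OF M] inv_meas_sets[OF N] by auto
  have AM: "A \<in> sets M" using sM A compact_sets by auto
  have BN: "B \<in> sets N" using sN B compact_sets by auto
  have ABs: "A \<times> B \<in> sets (M \<Otimes>\<^sub>M N)" using AM BN by auto
  have "emeasure (M \<Otimes>\<^sub>M N) (A \<times> B) = emeasure M A * emeasure N B"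
    using sigma_finite_measure.emeasure_pair_measure_Times[OF sf[OF N] AM BN] .
  also have "\<dots> < \<infinity>" using inv_meas_fin[OF M A] inv_meas_fin[OF N B] by (simp add: ennreal_mult_less_top)
  finally have "integrable (M \<Otimes>\<^sub>M N) (indicator (A \<times> B) :: _ \<Rightarrow> real)" using ABs by simp
  then have i1: "integrable (M \<Otimes>\<^sub>M N) (\<lambda>z. max Bd 0 * indicator (A \<times> B) z)" by simp
  have m1: "F \<in> borel_measurable (M \<Otimes>\<^sub>M N)" using pair_cont_meas[OF F sM sN] .
  have a0: "norm (F x) \<le> norm (max Bd 0 * indicator (A \<times> B) x :: real)" for x
  proof -
    have nn: "0 \<le> max Bd 0 * indicator (A \<times> B) x" by (intro mult_nonneg_nonneg) auto
    show ?thesis unfolding real_norm_def abs_of_nonneg[OF nn] by (rule bnd)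
  qed
  have a1: "AE x in M \<Otimes>\<^sub>M N. norm (F x) \<le> norm (max Bd 0 * indicator (A \<times> B) x)"
    by (rule AE_I2) (rule a0)
  show ?thesis by (rule Bochner_Integration.integrable_bound[OF i1 m1 a1])
qed

end


context GM begin

lemma key:
  fixes f g :: "'a \<Rightarrow> real" and M N :: "'a measure"
  assumes M: "inv_meas M" and N: "inv_meas N" and f: "Cc f" and g: "Cc g"
  shows "integral\<^sup>L M f * integral\<^sup>L N g = integral\<^sup>L M g * (\<integral>y. f (- y) \<partial>N)"
proof -
  interpret P: pair_sigma_finite M N
    unfolding pair_sigma_finite_def using sf[OF M] sf[OF N] by blast
  define Sf where "Sf = closure {x. f x \<noteq> 0}"
  define Sg where "Sg = closure {x. g x \<noteq> 0}"
  have cSf: "compact Sf" and cSg: "compact Sg" using f g unfolding Cc_def Sf_def Sg_def by auto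
  have fc: "continuous_on UNIV f" and gc: "continuous_on UNIV g" using f g unfolding Cc_def by auto
  have fB: "f \<in> borel_measurable borel" and gB: "g \<in> borel_measurable borel"
    using fc gc by (auto intro: borel_measurable_continuous_onI)
  have Sf0: "f x = 0" if "x \<notin> Sf" for x
  proof -
    have "{x. f x \<noteq> 0} \<subseteq> Sf" unfolding Sf_def by (rule closure_subset)
    then show ?thesis using that by blast
  qed
  have Sg0: "g x = 0" if "x \<notin> Sg" for x
  proof -
    have "{x. g x \<noteq> 0} \<subseteq> Sg" unfolding Sg_def by (rule closure_subset)
    then show ?thesis using that by blast
  qed
  define D where "D = (\<lambda>p. snd p - fst p) ` (Sf \<times> Sg)"
  have cD: "compact D" unfolding D_def
    by (intro compact_continuous_image compact_Times cSf cSg continuous_intros)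
  have cF1: "continuous_on UNIV (\<lambda>p::'a \<times> 'a. f (fst p) * g (fst p + snd p))"
    by (intro continuous_on_mult continuous_on_compose2[OF fc, of UNIV] 
        continuous_on_compose2[OF gc, of UNIV] continuous_intros) auto
  have sF1: "f (fst p) * g (fst p + snd p) = 0" if "p \<notin> Sf \<times> D" for p
  proof (rule ccontr)
    assume "f (fst p) * g (fst p + snd p) \<noteq> 0"
    then have "fst p \<in> Sf" "fst p + snd p \<in> Sg" using Sf0 Sg0 by auto
    then have "snd p \<in> D" unfolding D_def
      by (intro image_eqI[of _ _ "(fst p, fst p + snd p)"]) auto
    then show False using that \<open>fst p \<in> Sf\<close> by (cases p) auto
  qed
  have iF1: "integrable (M \<Otimes>\<^sub>M N) (\<lambda>p. f (fst p) * g (fst p + snd p))"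
    by (rule pair_integrable[OF M N cF1 cSf cD sF1])
  then have iF1': "integrable (M \<Otimes>\<^sub>M N) (case_prod (\<lambda>x y. f x * g (x + y)))"
    by (simp add: case_prod_beta')
  have cF2: "continuous_on UNIV (\<lambda>p::'a \<times> 'a. f (fst p - snd p) * g (fst p))"
    by (intro continuous_on_mult continuous_on_compose2[OF fc, of UNIV] 
        continuous_on_compose2[OF gc, of UNIV] continuous_intros) auto
  have sF2: "f (fst p - snd p) * g (fst p) = 0" if "p \<notin> Sg \<times> D" for p
  proof (rule ccontr)
    assume "f (fst p - snd p) * g (fst p) \<noteq> 0"
    then have "fst p - snd p \<in> Sf" "fst p \<in> Sg" using Sf0 Sg0 by auto
    then have "snd p \<in> D" unfolding D_def
      by (intro image_eqI[of _ _ "(fst p - snd p, fst p)"]) auto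
    then show False using that \<open>fst p \<in> Sg\<close> by (cases p) auto
  qed
  have iF2: "integrable (M \<Otimes>\<^sub>M N) (\<lambda>p. f (fst p - snd p) * g (fst p))"
    by (rule pair_integrable[OF M N cF2 cSg cD sF2])
  then have iF2': "integrable (M \<Otimes>\<^sub>M N) (case_prod (\<lambda>x y. f (x - y) * g x))"
    by (simp add: case_prod_beta')
  have fub1: "(\<integral>y. (\<integral>x. f x * g (x + y) \<partial>M) \<partial>N) = (\<integral>x. (\<integral>y. f x * g (x + y) \<partial>N) \<partial>M)"
    by (rule P.Fubini_integral[OF iF1'])
  have fub2: "(\<integral>y. (\<integral>x. f (x - y) * g x \<partial>M) \<partial>N) = (\<integral>x. (\<integral>y. f (x - y) * g x \<partial>N) \<partial>M)"
    by (rule P.Fubini_integral[OF iF2'])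
  have in1: "(\<integral>y. g (x + y) \<partial>N) = integral\<^sup>L N g" for x
  proof -
    have "(\<integral>y. g (x + y) \<partial>N) = (\<integral>y. g (y + x) \<partial>N)" by (simp add: add.commute)
    also have "\<dots> = integral\<^sup>L N g" by (rule inv_meas_transl[OF N gB])
    finally show ?thesis .
  qed
  have in2: "(\<integral>x. f x * g (x + y) \<partial>M) = (\<integral>x. f (x - y) * g x \<partial>M)" for y
  proof -
    have hB: "(\<lambda>x. f x * g (x + y)) \<in> borel_measurable borel"
      by (intro borel_measurable_continuous_onI continuous_on_mult continuous_on_compose2[OF fc, of UNIV]
          continuous_on_compose2[OF gc, of UNIV] continuous_intros) auto
    have "(\<integral>x. f x * g (x + y) \<partial>M) = (\<integral>x. f (x + - y) * g (x + - y + y) \<partial>M)"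
      using inv_meas_transl[OF M hB, of "- y"] by simp
    also have "\<dots> = (\<integral>x. f (x - y) * g x \<partial>M)" by simp
    finally show ?thesis .
  qed
  have in3: "(\<integral>y. f (x - y) \<partial>N) = (\<integral>y. f (- y) \<partial>N)" for x
  proof -
    have rB: "(\<lambda>z. f (- z)) \<in> borel_measurable borel" by (intro borel_measurable_continuous_onI continuous_on_compose2[OF fc, of UNIV] continuous_intros) auto
    have "(\<integral>y. f (x - y) \<partial>N) = (\<integral>y. f (- (y + - x)) \<partial>N)" by (simp add: algebra_simps)
    also have "\<dots> = (\<integral>y. f (- y) \<partial>N)" by (rule inv_meas_transl[OF N rB])
    finally show ?thesis .
  qed
  have "integral\<^sup>L M f * integral\<^sup>L N g = (\<integral>x. (\<integral>y. f x * g (x + y) \<partial>N) \<partial>M)"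
    by (simp add: in1)
  also have "\<dots> = (\<integral>y. (\<integral>x. f x * g (x + y) \<partial>M) \<partial>N)" by (rule fub1[symmetric])
  also have "\<dots> = (\<integral>y. (\<integral>x. f (x - y) * g x \<partial>M) \<partial>N)" by (simp add: in2)
  also have "\<dots> = (\<integral>x. (\<integral>y. f (x - y) * g x \<partial>N) \<partial>M)" by (rule fub2)
  also have "\<dots> = (\<integral>x. (\<integral>y. f (- y) \<partial>N) * g x \<partial>M)" by (simp add: in3)
  also have "\<dots> = integral\<^sup>L M g * (\<integral>y. f (- y) \<partial>N)" by (simp add: mult.commute)
  finally show ?thesis .
qed

lemma unique:
  fixes f g :: "'a \<Rightarrow> real" and M N :: "'a measure"
  assumes M: "inv_meas M" and N: "inv_meas N" and f: "Cc f" and g: "Cc g"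
    and Ng: "integral\<^sup>L N g \<noteq> 0"
  shows "integral\<^sup>L M f * integral\<^sup>L N g = integral\<^sup>L M g * integral\<^sup>L N f"
proof -
  have "integral\<^sup>L N f * integral\<^sup>L N g = integral\<^sup>L N g * (\<integral>y. f (- y) \<partial>N)"
    by (rule key[OF N N f g])
  then have r: "(\<integral>y. f (- y) \<partial>N) = integral\<^sup>L N f" using Ng by (simp add: mult.commute)
  show ?thesis using key[OF M N f g] r by simp
qed

end


context PS begin

lemma GM_inst: "GM Bas piece"
  by (unfold_locales) (use Bas piece_compact pieces_cover in auto)

lemma haar_inv: assumes "haar_on (UNIV :: 'g set) (+) lam" shows "inv_meas lam"
proof -
  have r: "radon_on UNIV lam" using assms unfolding haar_on_def by (rule conjunct1)
  have s: "sets lam = sets borel" using r unfolding radon_on_def by simp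
  have fin: "\<forall>K. compact K \<longrightarrow> emeasure lam K < \<infinity>" using r unfolding radon_on_def by simp
  have inv: "\<forall>a. \<forall>A\<in>sets lam. emeasure lam ((+) a ` A) = emeasure lam A"
    using assms unfolding haar_on_def by simp
  show ?thesis unfolding inv_meas_def using s fin inv by blast
qed

lemma haar_nonzero: assumes "haar_on (UNIV :: 'g set) (+) lam" shows "\<exists>A\<in>sets lam. emeasure lam A \<noteq> 0"
  using assms unfolding haar_on_def by simp

lemma haar_nontrivial:
  assumes h: "haar_on (UNIV :: 'g set) (+) lam"
  shows "nontrivial_measure E einv H lam"
  unfolding nontrivial_measure_def center
proof (intro conjI)
  show "\<exists>A\<in>sets lam. emeasure lam A \<noteq> 0" by (rule haar_nonzero[OF h])
  show "\<exists>A\<in>sets lam. emeasure lam A \<noteq> indicator A 0"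
  proof (rule ccontr)
    assume "\<not> (\<exists>A\<in>sets lam. emeasure lam A \<noteq> indicator A 0)"
    then have all: "\<And>A. A \<in> sets lam \<Longrightarrow> emeasure lam A = indicator A 0" by blast
    have M: "inv_meas lam" by (rule haar_inv[OF h])
    obtain x :: 'g where x: "x \<noteq> 0" using G_nontriv by blast
    have s0: "{0::'g} \<in> sets lam" using inv_meas_sets[OF M] by simp
    have sx: "{x} \<in> sets lam" using inv_meas_sets[OF M] by simp
    have "emeasure lam ((+) x ` {0}) = emeasure lam {0}" by (rule inv_meas_inv[OF M s0])
    then have "emeasure lam {x} = emeasure lam {0}" by simp
    moreover have "emeasure lam {x} = 0" using all[OF sx] x by simp
    moreover have "emeasure lam {0::'g} = 1" using all[OF s0] by simp
    ultimately show False by simp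
  qed
qed

lemma haar_open_pos:
  assumes h: "haar_on (UNIV :: 'g set) (+) lam" and U: "open U" "u \<in> U"
  shows "emeasure lam U > 0"
proof (rule ccontr)
  assume "\<not> emeasure lam U > 0"
  then have U0: "emeasure lam U = 0" by (simp add: not_gr_zero)
  have M: "inv_meas lam" by (rule haar_inv[OF h])
  have sM: "sets lam = sets borel" by (rule inv_meas_sets[OF M])
  have Us: "U \<in> sets lam" using sM U(1) by simp
  have tr0: "emeasure lam ((+) a ` U) = 0" for a using inv_meas_inv[OF M Us, of a] U0 by simp
  have trs: "(+) a ` U \<in> sets lam" for a
  proof -
    have "open ((\<lambda>x. a + x) ` U)" by (rule open_transl[OF U(1)])
    then show ?thesis using sM by simp
  qed
  have K0: "emeasure lam K = 0" if K: "compact K" for K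
  proof -
    have cov: "K \<subseteq> (\<Union>k\<in>K. (+) (k - u) ` U)"
    proof
      fix k assume "k \<in> K"
      moreover have "k = (k - u) + u" by simp
      ultimately show "k \<in> (\<Union>k\<in>K. (+) (k - u) ` U)" using U(2) by blast
    qed
    have opn: "open ((+) (k - u) ` U)" for k using open_transl[OF U(1), of "k - u"] by simp
    obtain F where F: "F \<subseteq> K" "finite F" "K \<subseteq> (\<Union>k\<in>F. (+) (k - u) ` U)"
      using compactE_image[OF K, of K "\<lambda>k. (+) (k - u) ` U"] opn cov by blast
    have "emeasure lam K \<le> emeasure lam (\<Union>k\<in>F. (+) (k - u) ` U)"
      using F(3) by (intro emeasure_mono) (use F(2) trs in auto)
    also have "\<dots> \<le> (\<Sum>k\<in>F. emeasure lam ((+) (k - u) ` U))"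
      using F(2) trs by (intro emeasure_subadditive_finite) auto
    also have "\<dots> = 0" using tr0 by simp
    finally show ?thesis by simp
  qed
  have "emeasure lam (\<Union>m. piece m) = 0"
    using K0[OF piece_compact] sM piece_compact compact_sets by (intro emeasure_UN_eq_0) auto
  then have UN0: "emeasure lam UNIV = 0" using pieces_cover by simp
  obtain A where A: "A \<in> sets lam" "emeasure lam A \<noteq> 0" using haar_nonzero[OF h] by blast
  have "emeasure lam A \<le> emeasure lam UNIV" using A(1) sM by (intro emeasure_mono) auto
  then show False using UN0 A(2) by simp
qed

lemma distr_inv:
  assumes h: "haar_on (UNIV :: 'g set) (+) lam" and e: "\<epsilon> \<in> E"
  shows "inv_meas (distr lam borel (H \<epsilon>))"
proof -
  have M: "inv_meas lam" by (rule haar_inv[OF h])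
  have sM: "sets lam = sets borel" by (rule inv_meas_sets[OF M])
  have spM: "space lam = UNIV" by (rule inv_meas_space[OF M])
  have meas: "H \<epsilon> \<in> measurable lam borel"
    by (rule inv_meas_cont_meas[OF M H_cont[OF e]])
  have ie: "einv \<epsilon> \<in> E" by (rule einv_E[OF e])
  have pre: "H \<epsilon> -` K = H (einv \<epsilon>) ` K" for K
  proof (rule set_eqI)
    fix y show "y \<in> H \<epsilon> -` K \<longleftrightarrow> y \<in> H (einv \<epsilon>) ` K"
    proof
      assume "y \<in> H \<epsilon> -` K"
      moreover have "y = H (einv \<epsilon>) (H \<epsilon> y)" using H_inv2[OF e] by simp
      ultimately show "y \<in> H (einv \<epsilon>) ` K" by blast
    next
      assume "y \<in> H (einv \<epsilon>) ` K"
      then obtain k where "k \<in> K" "y = H (einv \<epsilon>) k" by blast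
      then show "y \<in> H \<epsilon> -` K" using H_inv1[OF e] by simp
    qed
  qed
  have s1: "sets (distr lam borel (H \<epsilon>)) = sets borel" by simp
  have f1: "\<forall>K. compact K \<longrightarrow> emeasure (distr lam borel (H \<epsilon>)) K < \<infinity>"
  proof (intro allI impI)
    fix K :: "'g set" assume K: "compact K"
    have "emeasure (distr lam borel (H \<epsilon>)) K = emeasure lam (H \<epsilon> -` K \<inter> space lam)"
      by (rule emeasure_distr[OF meas compact_sets[OF K]])
    also have "\<dots> = emeasure lam (H (einv \<epsilon>) ` K)" using pre spM by simp
    also have "\<dots> < \<infinity>" by (rule inv_meas_fin[OF M H_compact[OF ie K]])
    finally show "emeasure (distr lam borel (H \<epsilon>)) K < \<infinity>" .
  qed
  have i1: "\<forall>a. \<forall>A\<in>sets (distr lam borel (H \<epsilon>)).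
      emeasure (distr lam borel (H \<epsilon>)) ((+) a ` A) = emeasure (distr lam borel (H \<epsilon>)) A"
  proof (intro allI ballI)
    fix a :: 'g and A assume "A \<in> sets (distr lam borel (H \<epsilon>))"
    then have A: "A \<in> sets borel" by simp
    have tr: "(+) a ` A = (\<lambda>x. x - a) -` A"
    proof (rule set_eqI)
      fix y show "y \<in> (+) a ` A \<longleftrightarrow> y \<in> (\<lambda>x. x - a) -` A"
      proof
        assume "y \<in> (+) a ` A" then show "y \<in> (\<lambda>x. x - a) -` A" by auto
      next
        assume "y \<in> (\<lambda>x. x - a) -` A"
        then have "y - a \<in> A" by simp
        moreover have "y = a + (y - a)" by simp
        ultimately show "y \<in> (+) a ` A" by blast
      qed
    qed
    have mm: "(\<lambda>x::'g. x - a) \<in> borel_measurable borel"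
      by (intro borel_measurable_continuous_onI continuous_intros)
    have aA: "(+) a ` A \<in> sets borel" unfolding tr using measurable_sets[OF mm A] by simp
    have HA: "H \<epsilon> -` A \<in> sets lam" using measurable_sets[OF meas A] spM by simp
    have eq: "H \<epsilon> -` ((+) a ` A) = (+) (H (einv \<epsilon>) a) ` (H \<epsilon> -` A)"
    proof (rule set_eqI)
      fix y show "y \<in> H \<epsilon> -` ((+) a ` A) \<longleftrightarrow> y \<in> (+) (H (einv \<epsilon>) a) ` (H \<epsilon> -` A)"
      proof
        assume "y \<in> H \<epsilon> -` ((+) a ` A)"
        then obtain z where z: "z \<in> A" "H \<epsilon> y = a + z" by blast
        have "H \<epsilon> (y - H (einv \<epsilon>) a) = z" using z H_diff[OF e] H_inv1[OF e] by simp
        then have "y - H (einv \<epsilon>) a \<in> H \<epsilon> -` A" using z by simp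
        moreover have "y = H (einv \<epsilon>) a + (y - H (einv \<epsilon>) a)" by simp
        ultimately show "y \<in> (+) (H (einv \<epsilon>) a) ` (H \<epsilon> -` A)" by blast
      next
        assume "y \<in> (+) (H (einv \<epsilon>) a) ` (H \<epsilon> -` A)"
        then obtain w where w: "H \<epsilon> w \<in> A" "y = H (einv \<epsilon>) a + w" by blast
        then have "H \<epsilon> y = a + H \<epsilon> w" using H_add[OF e] H_inv1[OF e] by simp
        then show "y \<in> H \<epsilon> -` ((+) a ` A)" using w by simp
      qed
    qed
    have "emeasure (distr lam borel (H \<epsilon>)) ((+) a ` A) = emeasure lam (H \<epsilon> -` ((+) a ` A) \<inter> space lam)"
      by (rule emeasure_distr[OF meas aA])
    also have "\<dots> = emeasure lam ((+) (H (einv \<epsilon>) a) ` (H \<epsilon> -` A))" using eq spM by simp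
    also have "\<dots> = emeasure lam (H \<epsilon> -` A)" by (rule inv_meas_inv[OF M HA])
    also have "\<dots> = emeasure (distr lam borel (H \<epsilon>)) A"
      using emeasure_distr[OF meas A] spM by simp
    finally show "emeasure (distr lam borel (H \<epsilon>)) ((+) a ` A) = emeasure (distr lam borel (H \<epsilon>)) A" .
  qed
  show ?thesis unfolding inv_meas_def using s1 f1 i1 by blast
qed

definition "bump = (\<lambda>y::'g. 1 - ps y)"

lemma bump_Cc: "Cc bump"
proof -
  have c: "continuous_on UNIV bump" unfolding bump_def by (intro continuous_intros psi_cont)
  have "{y. bump y \<noteq> 0} \<subseteq> WW" using ps(3) unfolding bump_def by force
  then have "closure {y. bump y \<noteq> 0} \<subseteq> closure WW" by (rule closure_mono)
  also have "\<dots> \<subseteq> KK" using WzKz(2,4) by (simp add: closure_minimal compact_imp_closed)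
  finally have sub: "closure {y. bump y \<noteq> 0} \<subseteq> KK" .
  have "compact (KK \<inter> closure {y. bump y \<noteq> 0})" using WzKz(2) by (intro compact_Int_closed) auto
  moreover have "KK \<inter> closure {y. bump y \<noteq> 0} = closure {y. bump y \<noteq> 0}" using sub by blast
  ultimately show ?thesis unfolding Cc_def using c by simp
qed

definition "Ob = {y::'g. ps y < 1/2}"

lemma Ob: "open Ob" "0 \<in> Ob" "Ob \<subseteq> KK" "\<And>y. (1/2) * indicator Ob y \<le> bump y"
proof -
  show "open Ob" unfolding Ob_def
    using open_vimage[OF open_lessThan psi_cont, of "1/2"] by (simp add: vimage_def lessThan_def)
  show "0 \<in> Ob" using ps(2) by (simp add: Ob_def)
  show "Ob \<subseteq> KK"
  proof
    fix y assume "y \<in> Ob"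
    then have "ps y \<noteq> 1" unfolding Ob_def by simp
    then have "y \<in> WW" using ps(3) by blast
    then show "y \<in> KK" using WzKz(4) by blast
  qed
  fix y
  show "(1/2) * indicator Ob y \<le> bump y"
    using psi_range[of y] unfolding bump_def Ob_def indicator_def by auto
qed

lemma bump_pos:
  assumes M: "inv_meas M" and pos: "emeasure M Ob > 0"
  shows "integral\<^sup>L M bump > 0"
proof -
  have sM: "sets M = sets borel" by (rule inv_meas_sets[OF M])
  have Os: "Ob \<in> sets M" using sM Ob(1) by simp
  have "emeasure M Ob \<le> emeasure M KK"
    using Ob(3) sM compact_sets[OF WzKz(2)] by (intro emeasure_mono) auto
  also have "\<dots> < \<infinity>" by (rule inv_meas_fin[OF M WzKz(2)])
  finally have fin: "emeasure M Ob < \<infinity>" .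
  have mpos: "measure M Ob > 0" using pos fin by (simp add: measure_def enn2real_positive_iff)
  have int1: "integrable M (\<lambda>y. (1/2::real) * indicator Ob y)" using Os fin by simp
  have "(\<integral>y. (1/2::real) * indicator Ob y \<partial>M) \<le> integral\<^sup>L M bump"
    by (rule integral_mono[OF int1 Cc_integrable[OF M bump_Cc]]) (rule Ob(4))
  moreover have "(\<integral>y. (1/2::real) * indicator Ob y \<partial>M) = (1/2) * measure M Ob"
    using inv_meas_space[OF M] by simp
  ultimately show ?thesis using mpos by simp
qed

lemma haar_homog:
  assumes h: "haar_on (UNIV :: 'g set) (+) lam"
  shows "homogeneous_measure E H lam"
  unfolding homogeneous_measure_def
proof (intro ballI)
  fix \<epsilon> assume e: "\<epsilon> \<in> E"
  interpret G: GM Bas piece by (rule GM_inst)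
  have M: "inv_meas lam" by (rule haar_inv[OF h])
  define Me where "Me = distr lam borel (H \<epsilon>)"
  have Me: "inv_meas Me" unfolding Me_def by (rule distr_inv[OF h e])
  have meas: "H \<epsilon> \<in> measurable lam borel"
    by (rule inv_meas_cont_meas[OF M H_cont[OF e]])
  have lb: "integral\<^sup>L lam bump > 0"
    by (rule bump_pos[OF M haar_open_pos[OF h Ob(1,2)]])
  have "emeasure Me Ob = emeasure lam (H \<epsilon> -` Ob \<inter> space lam)"
    unfolding Me_def by (rule emeasure_distr[OF meas]) (simp add: Ob(1))
  also have "\<dots> = emeasure lam (H \<epsilon> -` Ob)" using inv_meas_space[OF M] by simp
  also have "\<dots> > 0"
  proof (rule haar_open_pos[OF h])
    show "open (H \<epsilon> -` Ob)" using H_cont[OF e] Ob(1) by (simp add: continuous_on_open_vimage)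
    show "0 \<in> H \<epsilon> -` Ob" using H_0[OF e] Ob(2) by simp
  qed
  finally have mb: "integral\<^sup>L Me bump > 0" by (rule bump_pos[OF Me])
  define c where "c = integral\<^sup>L Me bump / integral\<^sup>L lam bump"
  have c0: "c > 0" unfolding c_def using lb mb by simp
  have call: "(\<integral>x. \<phi> (H \<epsilon> x) \<partial>lam) = c * integral\<^sup>L lam \<phi>"
    if "continuous_on UNIV \<phi> \<and> compact (closure {x. \<phi> x \<noteq> 0})" for \<phi> :: "'g \<Rightarrow> real"
  proof -
    have phi: "Cc \<phi>" using that unfolding Cc_def .
    have pB: "\<phi> \<in> borel_measurable borel"
      using phi unfolding Cc_def by (intro borel_measurable_continuous_onI) simp
    have "(\<integral>x. \<phi> (H \<epsilon> x) \<partial>lam) = integral\<^sup>L Me \<phi>"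
      unfolding Me_def by (rule integral_distr[OF meas pB, symmetric])
    moreover have "integral\<^sup>L Me \<phi> * integral\<^sup>L lam bump = integral\<^sup>L Me bump * integral\<^sup>L lam \<phi>"
      by (rule G.unique[OF Me M phi bump_Cc]) (use lb in simp)
    ultimately show ?thesis
      unfolding c_def using lb by (simp add: field_simps)
  qed
  show "\<exists>c::real>0. \<forall>\<phi>::'g\<Rightarrow>real. continuous_on UNIV \<phi> \<and> compact (closure {x. \<phi> x \<noteq> 0}) \<longrightarrow>
           (\<integral>x. \<phi> (H \<epsilon> x) \<partial>lam) = c * integral\<^sup>L lam \<phi>"
    using c0 call by blast
qed

end

theorem proposition5p1:
  fixes E :: "real set" and emul :: "real \<Rightarrow> real \<Rightarrow> real" and eone :: real
    and einv :: "real \<Rightarrow> real"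
    and H :: "real \<Rightarrow> 'g::{topological_ab_group_add, t2_space} \<Rightarrow> 'g"
  assumes G_lc: "locally_compact_space (euclidean :: 'g topology)"
    and G_nontriv: "\<exists>x::'g. x \<noteq> 0"
    and E: "R_group E emul eone einv"
    and act: "group_action E emul eone H"
    and cont: "continuous_action E H"
    and absorb: "absorptive E einv H"
    and additive: "\<forall>\<epsilon>\<in>E. \<forall>x y. H \<epsilon> (x + y) = H \<epsilon> x + H \<epsilon> y"
  shows "action_center E einv H = 0 \<and>
         metrizable_space (euclidean :: 'g topology) \<and>
         (sigma_compact (UNIV :: 'g set) \<and> \<not> compact (UNIV :: 'g set) \<and> (\<exists>x::'g. \<not> open {x})) \<and>
         (\<forall>lam. haar_on (UNIV :: 'g set) (+) lam \<longrightarrow>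
           nontrivial_measure E einv H lam \<and> homogeneous_measure E H lam)"
  proof -
  interpret PS E emul eone einv H
    by (unfold_locales) (fact G_lc G_nontriv E act cont absorb additive)+
  show ?thesis
    using center metrizable_G sigma_compact_G not_compact_G not_discrete_G haar_nontrivial haar_homog
    by blast
qed

end
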